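(* Let $\mathcal{B}$ be a bounding family on $[n]^d$ and $f:[n]^d\to\mathbb{R}$. Then $f\in\mathcal{P}(\mathcal{B})$ if and only if $f(x)-f(y)\le d_{\mathcal{B}}(x,y)$ for all $x,y\in[n]^d$.
   Context: A bounding family is a tuple of $2d$ functions $l_1,u_1,\dots,l_d,u_d:[n-1]\to\mathbb{R}$ with $l_r(y)<u_r(y)$. $\mathcal{P}(\mathcal{B})$ is the set of $f:[n]^d\to\mathbb{R}$ with $l_r(x_r)\le f(x+\mathbf{e}_r)-f(x)\le u_r(x_r)$ for all $r\in[d]$ and $x$ with $x_r<n$. For $x,y\in[n]^d$, $$d_{\mathcal{B}}(x,y)=\sum_{r:x_r>y_r}\ \sum_{t=y_r}^{x_r-1}u_r(t)\ -\ \sum_{r:x_r<y_r}\ \sum_{t=x_r}^{y_r-1}l_r(t).$$ *)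

theory Defs
  imports "HOL-Analysis.Analysis"
begin

definition grid :: "nat \<Rightarrow> nat \<Rightarrow> (nat \<Rightarrow> nat) set" where
  "grid n d = {x. (\<forall>r\<in>{1..d}. x r \<in> {1..n}) \<and> (\<forall>r. r \<notin> {1..d} \<longrightarrow> x r = 0)}"

definition unitv :: "nat \<Rightarrow> nat \<Rightarrow> nat" where
  "unitv r = (\<lambda>s. if s = r then 1 else 0)"

definition shift :: "(nat \<Rightarrow> nat) \<Rightarrow> nat \<Rightarrow> nat \<Rightarrow> nat" where
  "shift x r = (\<lambda>s. x s + unitv r s)"

definition bounding_family :: "nat \<Rightarrow> nat \<Rightarrow> (nat \<Rightarrow> nat \<Rightarrow> real) \<Rightarrow> (nat \<Rightarrow> nat \<Rightarrow> real) \<Rightarrow> bool" where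
  "bounding_family n d l u \<longleftrightarrow> (\<forall>r\<in>{1..d}. \<forall>y\<in>{1..n-1}. l r y < u r y)"

definition PB :: "nat \<Rightarrow> nat \<Rightarrow> (nat \<Rightarrow> nat \<Rightarrow> real) \<Rightarrow> (nat \<Rightarrow> nat \<Rightarrow> real) \<Rightarrow> ((nat \<Rightarrow> nat) \<Rightarrow> real) set" where
  "PB n d l u = {f. \<forall>r\<in>{1..d}. \<forall>x\<in>grid n d. x r < n \<longrightarrow>
      l r (x r) \<le> f (shift x r) - f x \<and> f (shift x r) - f x \<le> u r (x r)}"

definition dB :: "nat \<Rightarrow> (nat \<Rightarrow> nat \<Rightarrow> real) \<Rightarrow> (nat \<Rightarrow> nat \<Rightarrow> real) \<Rightarrow> (nat \<Rightarrow> nat) \<Rightarrow> (nat \<Rightarrow> nat) \<Rightarrow> real" where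
  "dB d l u x y =
     (\<Sum>r\<in>{r\<in>{1..d}. x r > y r}. \<Sum>t\<in>{y r..x r - 1}. u r t)
   - (\<Sum>r\<in>{r\<in>{1..d}. x r < y r}. \<Sum>t\<in>{x r..y r - 1}. l r t)"

end

theory Submission
  imports Defs
begin

lemma grid_upd:
  assumes "b \<in> grid n d" "r \<in> {1..d}" "v \<in> {1..n}"
  shows "b(r := v) \<in> grid n d"
  using assms unfolding grid_def by auto

lemma shift_upd: "shift (b(r := v)) r = b(r := v + 1)"
  unfolding shift_def unitv_def by auto

lemma step_bounds:
  assumes f: "f \<in> PB n d l u" and b: "b \<in> grid n d" and r: "r \<in> {1..d}"
  shows "b r + k \<le> n \<Longrightarrow> f (b(r := b r + k)) - f b \<le> (\<Sum>t\<in>{b r..<b r + k}. u r t)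
     \<and> (\<Sum>t\<in>{b r..<b r + k}. l r t) \<le> f (b(r := b r + k)) - f b"
proof (induction k)
  case 0
  then show ?case by simp
next
  case (Suc k)
  let ?a = "b(r := b r + k)"
  have br: "b r \<ge> 1" using b r unfolding grid_def by auto
  have ag: "?a \<in> grid n d" using grid_upd[OF b r, of "b r + k"] Suc.prems br by auto
  have "?a r < n" using Suc.prems by simp
  with f ag r have st: "l r (?a r) \<le> f (shift ?a r) - f ?a \<and> f (shift ?a r) - f ?a \<le> u r (?a r)"
    unfolding PB_def by blast
  have sh: "shift ?a r = b(r := b r + Suc k)" using shift_upd[of b r "b r + k"] by simp
  have kk: "b r + k \<le> n" using Suc.prems by simp
  have IH: "f ?a - f b \<le> (\<Sum>t\<in>{b r..<b r + k}. u r t) \<and> (\<Sum>t\<in>{b r..<b r + k}. l r t) \<le> f ?a - f b"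
    using Suc.IH[OF kk] .
  have s1: "(\<Sum>t\<in>{b r..<b r + Suc k}. u r t) = (\<Sum>t\<in>{b r..<b r + k}. u r t) + u r (b r + k)" by simp
  have s2: "(\<Sum>t\<in>{b r..<b r + Suc k}. l r t) = (\<Sum>t\<in>{b r..<b r + k}. l r t) + l r (b r + k)" by simp
  have ar: "?a r = b r + k" by simp
  show ?case unfolding s1 s2 using st IH unfolding sh ar by (simp del: fun_upd_apply)
qed

definition gterm :: "(nat \<Rightarrow> nat \<Rightarrow> real) \<Rightarrow> (nat \<Rightarrow> nat \<Rightarrow> real) \<Rightarrow> (nat \<Rightarrow> nat) \<Rightarrow> (nat \<Rightarrow> nat) \<Rightarrow> nat \<Rightarrow> real" where
  "gterm l u x y r = (if x r > y r then (\<Sum>t\<in>{y r..x r - 1}. u r t) else 0)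
      - (if x r < y r then (\<Sum>t\<in>{x r..y r - 1}. l r t) else 0)"

lemma dB_sum: "dB d l u x y = (\<Sum>r\<in>{1..d}. gterm l u x y r)"
  unfolding dB_def gterm_def
  by (simp add: sum_subtractf sum.inter_filter[symmetric])

lemma one_coord:
  assumes f: "f \<in> PB n d l u" and b: "b \<in> grid n d" and r: "r \<in> {1..d}"
    and v: "v \<in> {1..n}"
  shows "f (b(r := v)) - f b \<le> gterm l u (b(r := v)) b r"
proof -
  have br: "b r \<ge> 1" "b r \<le> n" using b r unfolding grid_def by auto
  consider "v > b r" | "v = b r" | "v < b r" by linarith
  then show ?thesis
  proof cases
    case 1
    have e: "b r + (v - b r) = v" using 1 by simp
    from step_bounds[OF f b r, of "v - b r"] v e
    have "f (b(r := v)) - f b \<le> (\<Sum>t\<in>{b r..<v}. u r t)" by simp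
    moreover have "{b r..<v} = {b r..v - 1}" using 1 by auto
    ultimately show ?thesis using 1 unfolding gterm_def by simp
  next
    case 2 then show ?thesis unfolding gterm_def by simp
  next
    case 3
    let ?a = "b(r := v)"
    have ag: "?a \<in> grid n d" using grid_upd[OF b r v] .
    have e: "?a(r := ?a r + (b r - v)) = b" using 3 by auto
    from step_bounds[OF f ag r, of "b r - v"] br 3 e
    have "(\<Sum>t\<in>{v..<b r}. l r t) \<le> f b - f ?a" by simp
    moreover have "{v..<b r} = {v..b r - 1}" using 3 by auto
    ultimately show ?thesis using 3 unfolding gterm_def by simp
  qed
qed

lemma forward:
  assumes f: "f \<in> PB n d l u" and x: "x \<in> grid n d" and y: "y \<in> grid n d"
  shows "f x - f y \<le> dB d l u x y"
proof -
  define z where "z m = (\<lambda>s. if s \<le> m then x s else y s)" for m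
  have zg: "z m \<in> grid n d" for m using x y unfolding grid_def z_def by auto
  have "m \<le> d \<Longrightarrow> f (z m) - f (z 0) \<le> (\<Sum>r\<in>{1..m}. gterm l u x y r)" for m
  proof (induction m)
    case 0 then show ?case by simp
  next
    case (Suc m)
    have zs: "z (Suc m) = (z m)(Suc m := x (Suc m))" unfolding z_def by auto
    have r: "Suc m \<in> {1..d}" using Suc.prems by simp
    have v: "x (Suc m) \<in> {1..n}" using x r unfolding grid_def by auto
    have "f (z (Suc m)) - f (z m) \<le> gterm l u ((z m)(Suc m := x (Suc m))) (z m) (Suc m)"
      using one_coord[OF f zg r v] zs by simp
    also have "\<dots> = gterm l u x y (Suc m)" unfolding gterm_def z_def by simp
    finally show ?case using Suc by simp
  qed
  from this[of d] have "f (z d) - f (z 0) \<le> dB d l u x y" by (simp add: dB_sum)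
  moreover have "z d = x" using x y unfolding z_def grid_def by (auto simp: fun_eq_iff)
  moreover have "z 0 = y" using x y unfolding z_def grid_def by (auto simp: fun_eq_iff)
  ultimately show ?thesis by simp
qed

theorem lemma2p2:
  fixes n d :: nat and l u :: "nat \<Rightarrow> nat \<Rightarrow> real" and f :: "(nat \<Rightarrow> nat) \<Rightarrow> real"
  assumes "bounding_family n d l u"
  shows "f \<in> PB n d l u \<longleftrightarrow> (\<forall>x\<in>grid n d. \<forall>y\<in>grid n d. f x - f y \<le> dB d l u x y)"
proof
  assume "f \<in> PB n d l u" then show "\<forall>x\<in>grid n d. \<forall>y\<in>grid n d. f x - f y \<le> dB d l u x y"
    using forward by blast
next
  assume H: "\<forall>x\<in>grid n d. \<forall>y\<in>grid n d. f x - f y \<le> dB d l u x y"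
  show "f \<in> PB n d l u" unfolding PB_def
  proof (intro CollectI ballI impI)
    fix r x assume r: "r \<in> {1..d}" and x: "x \<in> grid n d" and lt: "x r < n"
    have xr: "x r \<ge> 1" using x r unfolding grid_def by auto
    have s: "shift x r = x(r := x r + 1)" using shift_upd[of x r "x r"] by simp
    have sg: "shift x r \<in> grid n d" using grid_upd[OF x r, of "x r + 1"] lt s by auto
    have d1: "dB d l u (shift x r) x = u r (x r)"
    proof -
      have "dB d l u (x(r := x r + 1)) x = (\<Sum>s\<in>{1..d}. if s = r then u r (x r) else 0)"
        unfolding dB_sum by (rule sum.cong) (auto simp: gterm_def)
      then show ?thesis using r s by simp
    qed
    have d2: "dB d l u x (shift x r) = - l r (x r)"
    proof -
      have "dB d l u x (x(r := x r + 1)) = (\<Sum>s\<in>{1..d}. if s = r then - l r (x r) else 0)"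
        unfolding dB_sum by (rule sum.cong) (auto simp: gterm_def)
      then show ?thesis using r s by simp
    qed
    show "l r (x r) \<le> f (shift x r) - f x \<and> f (shift x r) - f x \<le> u r (x r)"
      using H x sg d1 d2 by fastforce
  qed
qed

end
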